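(* Let $G$ be a graph on $K$ vertices and let $m$ satisfy $3\le m\le K$. If the average degree of $G$ is at least $m$, then $G$ contains a connected-matching on at least $m$ vertices.
   Context: A matching is a set of pairwise vertex-disjoint edges; its number of vertices is twice its number of edges. A connected-matching is a matching all of whose edges lie in the same connected component of $G$. *)

theory Defs
  imports Complex_Main
begin

definition simple_graph :: "'a set \<Rightarrow> 'a set set \<Rightarrow> bool" where
  "simple_graph V E \<longleftrightarrow> finite V \<and> (\<forall>e\<in>E. e \<subseteq> V \<and> card e = 2)"

definition degree :: "'a set set \<Rightarrow> 'a \<Rightarrow> nat" where
  "degree E v = card {e\<in>E. v \<in> e}"

definition average_degree :: "'a set \<Rightarrow> 'a set set \<Rightarrow> real" where
  "average_degree V E = (\<Sum>v\<in>V. real (degree E v)) / real (card V)"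

definition adj :: "'a set set \<Rightarrow> 'a \<Rightarrow> 'a \<Rightarrow> bool" where
  "adj E u v \<longleftrightarrow> {u, v} \<in> E"

definition connected_in :: "'a set set \<Rightarrow> 'a \<Rightarrow> 'a \<Rightarrow> bool" where
  "connected_in E u v \<longleftrightarrow> (adj E)\<^sup>*\<^sup>* u v"

definition matching :: "'a set set \<Rightarrow> 'a set set \<Rightarrow> bool" where
  "matching E M \<longleftrightarrow> M \<subseteq> E \<and> (\<forall>e\<in>M. \<forall>f\<in>M. e \<noteq> f \<longrightarrow> e \<inter> f = {})"

definition connected_matching :: "'a set set \<Rightarrow> 'a set set \<Rightarrow> bool" where
  "connected_matching E M \<longleftrightarrow> matching E M \<and>
     (\<forall>u\<in>\<Union>M. \<forall>v\<in>\<Union>M. connected_in E u v)"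

end

theory Submission
  imports Defs
begin

definition nb :: "'a set set \<Rightarrow> 'a \<Rightarrow> 'a set" where
  "nb E x = {y. {x,y} \<in> E}"

definition comp :: "'a set set \<Rightarrow> 'a set \<Rightarrow> 'a \<Rightarrow> 'a set" where
  "comp E V v = {u\<in>V. connected_in E v u}"

lemma sg_finE: "simple_graph V E \<Longrightarrow> finite E"
  unfolding simple_graph_def
  by (metis Pow_iff finite_Pow_iff finite_subset subsetI)

lemma sg_edge: assumes "simple_graph V E" "{x,y} \<in> E" shows "x \<noteq> y" "x \<in> V" "y \<in> V"
  using assms unfolding simple_graph_def by (auto simp: card_insert_if split: if_splits)

lemma nb_sym: "y \<in> nb E x \<longleftrightarrow> x \<in> nb E y"
  unfolding nb_def by (simp add: insert_commute)

lemma nb_sub: assumes "simple_graph V E" shows "nb E x \<subseteq> V"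
  unfolding nb_def using sg_edge(3)[OF assms] by blast

lemma degree_nb: assumes sg: "simple_graph V E" shows "degree E x = card (nb E x)"
proof -
  have "bij_betw (\<lambda>y. {x,y}) (nb E x) {e\<in>E. x \<in> e}"
  proof (rule bij_betwI')
    show "\<And>y z. y \<in> nb E x \<Longrightarrow> z \<in> nb E x \<Longrightarrow> ({x, y} = {x, z}) = (y = z)"
      unfolding nb_def using sg_edge[OF sg] by (auto simp: doubleton_eq_iff)
    show "\<And>y. y \<in> nb E x \<Longrightarrow> {x, y} \<in> {e \<in> E. x \<in> e}" unfolding nb_def by auto
    fix e assume "e \<in> {e \<in> E. x \<in> e}"
    then have "e \<in> E" "x \<in> e" "card e = 2" using sg unfolding simple_graph_def by auto
    then obtain a b where "e = {a,b}" "a \<noteq> b" by (auto simp: card_2_iff)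
    then show "\<exists>y\<in>nb E x. e = {x, y}" using \<open>e\<in>E\<close> \<open>x\<in>e\<close> unfolding nb_def
      by (auto simp: insert_commute)
  qed
  then show ?thesis unfolding degree_def by (simp add: bij_betw_same_card)
qed

lemma adj_sym: "adj E u v \<Longrightarrow> adj E v u"
  unfolding adj_def by (simp add: insert_commute)

lemma conn_sym: "connected_in E u v \<Longrightarrow> connected_in E v u"
  unfolding connected_in_def
proof (induction rule: rtranclp_induct)
  case base then show ?case by simp
next
  case (step y z)
  then show ?case using adj_sym
    by (meson converse_rtranclp_into_rtranclp)
qed

lemma conn_trans: "connected_in E u v \<Longrightarrow> connected_in E v w \<Longrightarrow> connected_in E u w"
  unfolding connected_in_def by simp

lemma comp_nb: assumes sg: "simple_graph V E" and "u \<in> comp E V v" shows "nb E u \<subseteq> comp E V v"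
proof
  fix y assume "y \<in> nb E u"
  then have "adj E u y" "y \<in> V" unfolding nb_def adj_def using sg_edge[OF sg] by auto
  then show "y \<in> comp E V v" using assms(2) unfolding comp_def connected_in_def
    by (auto intro: rtranclp.rtrancl_into_rtrancl)
qed

definition pm :: "'a set set \<Rightarrow> 'a set \<Rightarrow> 'a set set \<Rightarrow> bool" where
  "pm E C M \<longleftrightarrow> M \<subseteq> E \<and> \<Union>M \<subseteq> C \<and> (\<forall>e\<in>M. \<forall>f\<in>M. e \<noteq> f \<longrightarrow> e \<inter> f = {})"

lemma pm_cm: assumes "pm E (comp E V v) M" shows "connected_matching E M"
  unfolding connected_matching_def matching_def
proof (intro conjI ballI)
  show "M \<subseteq> E" using assms unfolding pm_def by auto
  show "\<And>e f. e \<in> M \<Longrightarrow> f \<in> M \<Longrightarrow> e \<noteq> f \<longrightarrow> e \<inter> f = {}" using assms unfolding pm_def by auto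
  fix x y assume "x \<in> \<Union>M" "y \<in> \<Union>M"
  then have "connected_in E v x" "connected_in E v y" using assms unfolding pm_def comp_def by auto
  then show "connected_in E x y" using conn_sym[of E v x] conn_trans[of E x v y] by blast
qed

lemma comp_bound:
  assumes sg: "simple_graph V E" and nocm: "\<forall>M. connected_matching E M \<longrightarrow> 2 * card M < m"
  shows "(\<Sum>x\<in>comp E V v. card (nb E x)) \<le> (m - 1) * card (comp E V v)"
proof -
  define C where "C = comp E V v"
  have finV: "finite V" using sg unfolding simple_graph_def by auto
  have finC: "finite C" unfolding C_def comp_def using finV by auto
  have finE: "finite E" using sg_finE[OF sg] .
  have E2: "\<And>e. e \<in> E \<Longrightarrow> card e = 2" using sg unfolding simple_graph_def by auto
  have bnd: "\<forall>M. pm E C M \<longrightarrow> card M \<le> m" using nocm pm_cm unfolding C_def by fastforce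
  have "pm E C {}" unfolding pm_def by auto
  moreover have "\<forall>M. pm E C M \<longrightarrow> card M < Suc m" using bnd by auto
  ultimately have "\<exists>M. pm E C M \<and> (\<forall>M'. pm E C M' \<longrightarrow> card M' \<le> card M)"
    by (rule ex_has_greatest_nat)
  then obtain M where PM: "pm E C M" and mx: "\<And>M'. pm E C M' \<Longrightarrow> card M' \<le> card M"
    by blast
  define s where "s = card M"
  have s2: "2 * s < m" using nocm pm_cm PM unfolding s_def C_def by fastforce
  have ME: "M \<subseteq> E" and MC: "\<Union>M \<subseteq> C" and Md: "\<And>e f. e\<in>M \<Longrightarrow> f\<in>M \<Longrightarrow> e \<noteq> f \<Longrightarrow> e \<inter> f = {}"
    using PM unfolding pm_def by auto
  have finM: "finite M" using ME finE finite_subset by auto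
  have finMe: "\<And>e. e \<in> M \<Longrightarrow> finite e" using ME E2
    by (metis card.infinite subsetD zero_neq_numeral)
  define W where "W = \<Union>M"
  define U where "U = C - W"
  have finW: "finite W" unfolding W_def using finM ME E2
    by (metis card.infinite finite_Union subsetD zero_neq_numeral)
  have finU: "finite U" unfolding U_def using finC by auto
  have cardW: "card W = 2 * s"
  proof -
    have "card W = sum card M" unfolding W_def
      by (rule card_Union_disjoint) (use Md finMe finM in \<open>auto simp: pairwise_def disjnt_def\<close>)
    also have "\<dots> = sum (\<lambda>_. 2) M" using ME E2 by (intro sum.cong) auto
    finally show ?thesis unfolding s_def by simp
  qed
  have nbC: "\<And>x. x \<in> C \<Longrightarrow> nb E x \<subseteq> C" unfolding C_def using comp_nb[OF sg] by blast
  have nbE: "\<And>x y. y \<in> nb E x \<Longrightarrow> {x,y} \<in> E" unfolding nb_def by auto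
  have finnb: "\<And>x. finite (nb E x)" using nb_sub[OF sg] finV finite_subset by blast
  have key1: "nb E a \<subseteq> W" if a: "a \<in> U" for a
  proof
    fix b assume b: "b \<in> nb E a"
    show "b \<in> W"
    proof (rule ccontr)
      assume bW: "b \<notin> W"
      have bC: "b \<in> C" using nbC[of a] a b unfolding U_def by auto
      have ab: "a \<noteq> b" using sg_edge[OF sg nbE[OF b]] by auto
      have nin: "{a,b} \<notin> M" using a unfolding U_def W_def by auto
      have "pm E C (insert {a,b} M)"
        using PM nbE[OF b] a bC bW unfolding pm_def U_def W_def by auto
      then have "card (insert {a,b} M) \<le> card M" by (rule mx)
      then show False using nin finM by simp
    qed
  qed
  have key2: "card (nb E u \<inter> U) + card (nb E w \<inter> U) \<le> card U + 1"
    if e: "{u,w} \<in> M" and uw: "u \<noteq> w" for u w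
  proof -
    have same: "a = b" if a: "a \<in> nb E u \<inter> U" and b: "b \<in> nb E w \<inter> U" for a b
    proof (rule ccontr)
      assume ab: "a \<noteq> b"
      have aW: "a \<notin> W" "b \<notin> W" using a b unfolding U_def by auto
      have uW: "u \<in> W" "w \<in> W" using e unfolding W_def by auto
      have aC: "a \<in> C" "b \<in> C" using a b unfolding U_def by auto
      define M' where "M' = insert {u,a} (insert {w,b} (M - {{u,w}}))"
      have n1: "{u,a} \<notin> M - {{u,w}}" "{w,b} \<notin> M - {{u,w}}" using aW unfolding W_def by auto
      have n2: "{u,a} \<noteq> {w,b}" using uw uW aW by (auto simp: doubleton_eq_iff)
      have cM: "card M' = s + 1"
      proof -
        have "card (M - {{u,w}}) = s - 1" using e finM unfolding s_def by simp
        moreover have "s \<ge> 1" using e finM unfolding s_def by (metis One_nat_def Suc_leI card_gt_0_iff empty_iff)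
        ultimately show ?thesis unfolding M'_def using n1 n2 finM by simp
      qed
      have disj: "\<And>f. f \<in> M - {{u,w}} \<Longrightarrow> u \<notin> f \<and> w \<notin> f \<and> a \<notin> f \<and> b \<notin> f"
      proof -
        fix f assume f: "f \<in> M - {{u,w}}"
        then have "f \<inter> {u,w} = {}" using Md[of f "{u,w}"] e by auto
        moreover have "a \<notin> f" "b \<notin> f" using f aW unfolding W_def by auto
        ultimately show "u \<notin> f \<and> w \<notin> f \<and> a \<notin> f \<and> b \<notin> f" by auto
      qed
      have "pm E C M'"
        unfolding pm_def M'_def
      proof (intro conjI)
        show "insert {u, a} (insert {w, b} (M - {{u, w}})) \<subseteq> E"
          using ME a b nbE by auto
        show "\<Union> (insert {u, a} (insert {w, b} (M - {{u, w}}))) \<subseteq> C"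
          using MC aC uW unfolding W_def by auto
        show "\<forall>e\<in>insert {u, a} (insert {w, b} (M - {{u, w}})).
            \<forall>f\<in>insert {u, a} (insert {w, b} (M - {{u, w}})). e \<noteq> f \<longrightarrow> e \<inter> f = {}"
        proof (intro ballI impI)
          fix x y assume x: "x \<in> insert {u, a} (insert {w, b} (M - {{u, w}}))"
            and y: "y \<in> insert {u, a} (insert {w, b} (M - {{u, w}}))" and xy: "x \<noteq> y"
          have ub: "u \<noteq> b" "a \<noteq> w" using uW aW by auto
          show "x \<inter> y = {}"
            using x y xy disj Md ab uw ub by auto
        qed
      qed
      then have "card M' \<le> card M" by (rule mx)
      then show False using cM unfolding s_def by simp
    qed
    show ?thesis
    proof (cases "nb E u \<inter> U = {} \<or> nb E w \<inter> U = {}")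
      case True
      then show ?thesis using card_mono[OF finU, of "nb E u \<inter> U"] card_mono[OF finU, of "nb E w \<inter> U"]
        by auto
    next
      case False
      then obtain a b where a: "a \<in> nb E u \<inter> U" and b: "b \<in> nb E w \<inter> U" by blast
      have "nb E u \<inter> U \<subseteq> {b}" using same b by blast
      then have c1: "card (nb E u \<inter> U) \<le> 1" using card_mono[of "{b}"] by fastforce
      have "nb E w \<inter> U \<subseteq> {a}" using same a by blast
      then have c2: "card (nb E w \<inter> U) \<le> 1" using card_mono[of "{a}"] by fastforce
      have "card U \<ge> 1" using a finU by (metis IntD2 One_nat_def Suc_leI card_gt_0_iff empty_iff)
      then show ?thesis using c1 c2 by linarith
    qed
  qed
  have key3: "card (nb E x) \<le> (card W - 1) + card (nb E x \<inter> U)" if x: "x \<in> W" for x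
  proof -
    have xC: "x \<in> C" using x MC unfolding W_def by auto
    have "nb E x = (nb E x \<inter> W) \<union> (nb E x \<inter> U)" using nbC[OF xC] unfolding U_def by auto
    then have "card (nb E x) \<le> card (nb E x \<inter> W) + card (nb E x \<inter> U)"
      by (metis card_Un_le)
    moreover have "nb E x \<inter> W \<subseteq> W - {x}" using sg_edge[OF sg nbE] by blast
    then have "card (nb E x \<inter> W) \<le> card W - 1"
      using card_mono[OF _ \<open>nb E x \<inter> W \<subseteq> W - {x}\<close>] finW x by simp
    ultimately show ?thesis by linarith
  qed
  have dc: "(\<Sum>a\<in>U. card (nb E a \<inter> W)) = (\<Sum>x\<in>W. card (nb E x \<inter> U))"
  proof -
    have "(\<Sum>a\<in>U. card (nb E a \<inter> W)) = (\<Sum>a\<in>U. \<Sum>x\<in>W. if x \<in> nb E a then 1 else 0)"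
      using finW by (intro sum.cong) (auto simp: sum.If_cases Int_def conj_commute)
    also have "\<dots> = (\<Sum>x\<in>W. \<Sum>a\<in>U. if x \<in> nb E a then 1 else 0)" by (rule sum.swap)
    also have "\<dots> = (\<Sum>x\<in>W. \<Sum>a\<in>U. if a \<in> nb E x then 1 else 0)" by (simp add: nb_sym)
    also have "\<dots> = (\<Sum>x\<in>W. card (nb E x \<inter> U))"
      using finU by (intro sum.cong) (auto simp: sum.If_cases Int_def conj_commute)
    finally show ?thesis .
  qed
  have sumM: "(\<Sum>x\<in>W. card (nb E x \<inter> U)) \<le> s * (card U + 1)"
  proof -
    have "(\<Sum>x\<in>W. card (nb E x \<inter> U)) = (\<Sum>e\<in>M. \<Sum>x\<in>e. card (nb E x \<inter> U))"
      unfolding W_def using sum.Union_disjoint[of M "\<lambda>x. card (nb E x \<inter> U)"] Md finMe by auto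
    also have "\<dots> \<le> (\<Sum>e\<in>M. card U + 1)"
    proof (rule sum_mono)
      fix e assume e: "e \<in> M"
      then obtain u w where uw: "e = {u,w}" "u \<noteq> w" using ME E2 by (meson card_2_iff subsetD)
      then show "(\<Sum>x\<in>e. card (nb E x \<inter> U)) \<le> card U + 1" using key2[of u w] e by simp
    qed
    finally show ?thesis unfolding s_def by simp
  qed
  have CWU: "C = W \<union> U" "W \<inter> U = {}" using MC unfolding U_def W_def by auto
  have t1: "(\<Sum>x\<in>C. card (nb E x)) = (\<Sum>x\<in>W. card (nb E x)) + (\<Sum>a\<in>U. card (nb E a))"
    using CWU finW finU by (simp add: sum.union_disjoint)
  have t2: "(\<Sum>a\<in>U. card (nb E a)) = (\<Sum>a\<in>U. card (nb E a \<inter> W))"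
    using key1 by (intro sum.cong) (auto simp: Int_absorb2)
  have t3: "(\<Sum>x\<in>W. card (nb E x)) \<le> (\<Sum>x\<in>W. (card W - 1) + card (nb E x \<inter> U))"
    using key3 by (rule sum_mono)
  have t4: "(\<Sum>x\<in>W. (card W - 1) + card (nb E x \<inter> U)) = card W * (card W - 1) + (\<Sum>x\<in>W. card (nb E x \<inter> U))"
    by (simp add: sum.distrib)
  define X where "X = (\<Sum>x\<in>W. card (nb E x \<inter> U))"
  have t5: "(\<Sum>x\<in>C. card (nb E x)) \<le> 2*s * (2*s - 1) + 2 * X"
  proof -
    have "card W * (card W - 1) = 2*s*(2*s-1)" using cardW by simp
    then show ?thesis using t1 t2 t3 t4 dc unfolding X_def by linarith
  qed
  have t6: "2*s * (2*s - 1) + 2 * X \<le> 2*s * (2*s - 1) + 2 * (s * (card U + 1))"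
    using sumM unfolding X_def by simp
  have t7: "2*s * (2*s - 1) + 2 * (s * (card U + 1)) = 2 * s * (2 * s + card U)"
    by (cases s) (auto simp: algebra_simps)
  have t8: "2 * s + card U = card C" using CWU finW finU cardW by (simp add: card_Un_disjoint)
  have t9: "2 * s * card C \<le> (m - 1) * card C" using s2 by (intro mult_right_mono) auto
  have "(\<Sum>x\<in>C. card (nb E x)) \<le> (m - 1) * card C" 
  proof -
    have "2*s * (2*s - 1) + 2 * (s * (card U + 1)) = 2 * s * card C" using t7 t8 by simp
    then show ?thesis using t5 t6 t9 by linarith
  qed
  then show ?thesis unfolding C_def .
qed

lemma comp_eq: assumes "x \<in> comp E V v" shows "comp E V x = comp E V v"
proof -
  have cv: "connected_in E v x" using assms unfolding comp_def by auto
  then have cx: "connected_in E x v" by (rule conn_sym)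
  show ?thesis unfolding comp_def using conn_trans[OF cv] conn_trans[OF cx] by blast
qed

theorem corollary7p9:
  fixes V :: "'a set" and E :: "'a set set" and K m :: nat
  assumes "simple_graph V E"
    and "card V = K"
    and "3 \<le> m" and "m \<le> K"
    and "average_degree V E \<ge> real m"
  shows "\<exists>M. connected_matching E M \<and> 2 * card M \<ge> m"
proof (rule ccontr)
  assume "\<not> ?thesis"
  then have nocm: "\<forall>M. connected_matching E M \<longrightarrow> 2 * card M < m" by (auto simp: not_le)
  have sg: "simple_graph V E" by fact
  have finV: "finite V" using sg unfolding simple_graph_def by auto
  define CS where "CS = comp E V ` V"
  have sub: "\<And>v. comp E V v \<subseteq> V" unfolding comp_def by auto
  have self: "\<And>v. v \<in> V \<Longrightarrow> v \<in> comp E V v" unfolding comp_def connected_in_def by auto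
  have Vun: "V = \<Union>CS" unfolding CS_def using sub self by blast
  have finCS: "\<forall>A\<in>CS. finite A" unfolding CS_def using sub finV finite_subset by blast
  have disj: "\<forall>A\<in>CS. \<forall>B\<in>CS. A \<noteq> B \<longrightarrow> A \<inter> B = {}"
  proof (intro ballI impI)
    fix A B assume A: "A \<in> CS" and B: "B \<in> CS" and AB: "A \<noteq> B"
    show "A \<inter> B = {}"
    proof (rule ccontr)
      assume "A \<inter> B \<noteq> {}"
      then obtain x where "x \<in> A" "x \<in> B" by blast
      with A B show False using AB comp_eq unfolding CS_def by (metis imageE)
    qed
  qed
  have "(\<Sum>x\<in>V. card (nb E x)) = (\<Sum>A\<in>CS. \<Sum>x\<in>A. card (nb E x))"
    using sum.Union_disjoint[OF finCS disj, of "\<lambda>x. card (nb E x)"] Vun by simp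
  also have "\<dots> \<le> (\<Sum>A\<in>CS. (m - 1) * card A)"
  proof (rule sum_mono)
    fix A assume "A \<in> CS"
    then obtain v where "A = comp E V v" unfolding CS_def by blast
    then show "(\<Sum>x\<in>A. card (nb E x)) \<le> (m - 1) * card A" using comp_bound[OF sg nocm] by simp
  qed
  also have "\<dots> = (m - 1) * (\<Sum>A\<in>CS. card A)" by (simp add: sum_distrib_left)
  also have "(\<Sum>A\<in>CS. card A) = card V"
    using sum.Union_disjoint[OF finCS disj, of "\<lambda>_. 1::nat"] Vun by simp
  finally have le: "(\<Sum>x\<in>V. card (nb E x)) \<le> (m - 1) * K" using assms(2) by simp
  have Kpos: "real K > 0" using assms(3,4) by simp
  have "real m \<le> (\<Sum>v\<in>V. real (degree E v)) / real K"
    using assms(5) assms(2) unfolding average_degree_def by simp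
  then have "real m * real K \<le> (\<Sum>v\<in>V. real (degree E v))"
    using Kpos by (simp add: pos_le_divide_eq)
  also have "\<dots> = real (\<Sum>x\<in>V. card (nb E x))" using degree_nb[OF sg] by simp
  also have "\<dots> \<le> real ((m - 1) * K)" using le by linarith
  finally have "m * K \<le> (m - 1) * K" by (simp only: of_nat_mult[symmetric] of_nat_le_iff)
  moreover have "(m - 1) * K < m * K" using assms(3,4) by simp
  ultimately show False by linarith
qed

end
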